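(* Let $\Omega\subset\mathbb{R}$ be an open nonempty set such that $$\Omega = \bigoplus_{k=1}^m\Omega := \{y_1+\dots+y_m : y_k\in\Omega,\ 1\leq k\leq m\}$$ for some integer $m\geq 2$. Then $\Omega\in\{(0,+\infty),\ (-\infty,0),\ \mathbb{R}\}$. *)

theory Defs
  imports "HOL-Analysis.Analysis"
begin

definition msum :: "nat \<Rightarrow> real set \<Rightarrow> real set" where
  "msum m A = {(\<Sum>k\<in>{1..m}. y k) | y. \<forall>k\<in>{1..m}. y k \<in> A}"

end

theory Submission
  imports Defs
begin

lemma C1_of_msum:
  fixes \<Omega> :: "real set"
  assumes eq: "\<Omega> = msum m \<Omega>" and p: "p \<in> \<Omega>" and q: "q \<in> \<Omega>" and r: "r \<in> \<Omega>"
    and cd: "c + d + 1 = m"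
  shows "real c * p + real d * q + r \<in> \<Omega>"
proof -
  define y where "y = (\<lambda>k::nat. if k \<le> c then p else if k \<le> c + d then q else r)"
  have split: "{1..m} = ({1..c} \<union> {c+1..c+d}) \<union> {m}" using cd by auto
  have s1: "(\<Sum>k\<in>{1..c}. y k) = real c * p"
    by (simp add: y_def)
  have s2: "(\<Sum>k\<in>{c+1..c+d}. y k) = real d * q"
  proof -
    have "(\<Sum>k\<in>{c+1..c+d}. y k) = (\<Sum>k\<in>{c+1..c+d}. q)"
      by (rule sum.cong) (auto simp: y_def)
    then show ?thesis by simp
  qed
  have s3: "y m = r" using cd by (simp add: y_def)
  have "(\<Sum>k\<in>{1..m}. y k) = (\<Sum>k\<in>{1..c} \<union> {c+1..c+d}. y k) + y m"
    unfolding split using cd by (subst sum.union_disjoint) auto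
  also have "\<dots> = real c * p + real d * q + r"
  proof -
    have "(\<Sum>k\<in>{1..c} \<union> {c+1..c+d}. y k) = (\<Sum>k\<in>{1..c}. y k) + (\<Sum>k\<in>{c+1..c+d}. y k)"
      by (rule sum.union_disjoint) auto
    then show ?thesis using s1 s2 s3 by simp
  qed
  finally have S: "(\<Sum>k\<in>{1..m}. y k) = real c * p + real d * q + r" .
  have "\<forall>k\<in>{1..m}. y k \<in> \<Omega>" using p q r by (auto simp: y_def)
  then have "(\<Sum>k\<in>{1..m}. y k) \<in> msum m \<Omega>" unfolding msum_def by blast
  then show ?thesis using S eq by simp
qed

lemma iter:
  fixes \<Omega> :: "real set"
  assumes C1: "\<And>p q r c d. p\<in>\<Omega> \<Longrightarrow> q\<in>\<Omega> \<Longrightarrow> r\<in>\<Omega> \<Longrightarrow> c + d + 1 = m \<Longrightarrow> real c * p + real d * q + r \<in> \<Omega>"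
    and m: "m \<ge> 2" and p: "p\<in>\<Omega>" and q: "q\<in>\<Omega>"
  shows "a + b = 1 + j*(m-1) \<Longrightarrow> real a * p + real b * q \<in> \<Omega>"
proof (induction j arbitrary: a b)
  case 0
  then have "(a = 1 \<and> b = 0) \<or> (a = 0 \<and> b = 1)" by auto
  then show ?case using p q by auto
next
  case (Suc j)
  define c where "c = min a (m-1)"
  define d where "d = m - 1 - c"
  have cd: "c + d + 1 = m" using m by (simp add: c_def d_def)
  define K where "K = j*(m-1)"
  have abK: "a + b = 1 + K + (m-1)" using Suc.prems by (simp add: K_def)
  have ab0: "(a - c) + (b - d) = 1 + K" and cle: "c \<le> a" and dle: "d \<le> b"
    using abK m unfolding c_def d_def by (auto simp: min_def)
  have ab: "(a - c) + (b - d) = 1 + j*(m-1)" using ab0 by (simp add: K_def)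
  have r: "real (a - c) * p + real (b - d) * q \<in> \<Omega>" using Suc.IH[OF ab] .
  have "real c * p + real d * q + (real (a - c) * p + real (b - d) * q) \<in> \<Omega>"
    using C1[OF p q r cd] .
  moreover have "real c * p + real d * q + (real (a - c) * p + real (b - d) * q)
      = real a * p + real b * q" using cle dle by (simp add: of_nat_diff algebra_simps)
  ultimately show ?case by simp
qed

lemma zero_case:
  fixes \<Omega> :: "real set"
  assumes C1: "\<And>p q r c d. p\<in>\<Omega> \<Longrightarrow> q\<in>\<Omega> \<Longrightarrow> r\<in>\<Omega> \<Longrightarrow> c + d + 1 = m \<Longrightarrow> real c * p + real d * q + r \<in> \<Omega>"
    and m: "m \<ge> 2" and op: "open \<Omega>" and z: "0 \<in> \<Omega>"
  shows "\<Omega> = UNIV"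
proof -
  obtain e where e: "e > 0" "ball 0 e \<subseteq> \<Omega>" using op z open_contains_ball by blast
  have "y \<in> \<Omega>" for y
  proof -
    define j where "j = nat (ceiling (\<bar>y\<bar> / e)) + 1"
    define n where "n = 1 + j*(m-1)"
    have "real j > \<bar>y\<bar> / e" unfolding j_def by linarith
    moreover have "n \<ge> j" proof -
      have "j*1 \<le> j*(m-1)" by (rule mult_le_mono2) (use m in linarith)
      then show ?thesis unfolding n_def by linarith
    qed
    ultimately have nn: "real n > \<bar>y\<bar> / e" by linarith
    have npos: "real n > 0" unfolding n_def by (simp add: add_pos_nonneg)
    have "\<bar>y\<bar> < real n * e" using nn e npos by (simp add: field_simps)
    then have "\<bar>y / real n\<bar> < e" using npos by (simp add: field_simps abs_divide)
    then have pin: "y / real n \<in> \<Omega>" using e by (auto simp: dist_real_def)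
    have "real n * (y / real n) + real 0 * (y / real n) \<in> \<Omega>"
      apply (rule iter[where \<Omega>=\<Omega> and m=m and a=n and b=0 and j=j]) apply (fact C1) apply (fact m) apply (fact pin) apply (fact pin) by (simp add: n_def)
    then show ?thesis using npos by simp
  qed
  then show ?thesis by auto
qed

lemma mixed_case:
  fixes \<Omega> :: "real set"
  assumes C1: "\<And>p q r c d. p\<in>\<Omega> \<Longrightarrow> q\<in>\<Omega> \<Longrightarrow> r\<in>\<Omega> \<Longrightarrow> c + d + 1 = m \<Longrightarrow> real c * p + real d * q + r \<in> \<Omega>"
    and m: "m \<ge> 2" and op: "open \<Omega>" and u: "u \<in> \<Omega>" "u < 0" and v: "v \<in> \<Omega>" "v > 0"
  shows "0 \<in> \<Omega>"
proof -
  obtain e1 where e1: "e1 > 0" "ball u e1 \<subseteq> \<Omega>" using op u open_contains_ball by blast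
  obtain e2 where e2: "e2 > 0" "ball v e2 \<subseteq> \<Omega>" using op v open_contains_ball by blast
  define e where "e = min e1 e2"
  have e: "e > 0" "ball u e \<subseteq> \<Omega>" "ball v e \<subseteq> \<Omega>" using e1 e2 by (auto simp: e_def)
  define j where "j = nat (ceiling ((v - u) / e)) + 1"
  define n where "n = 1 + j*(m-1)"
  have "real j > (v - u) / e" unfolding j_def by linarith
  moreover have "n \<ge> j" proof -
    have "j*1 \<le> j*(m-1)" by (rule mult_le_mono2) (use m in linarith)
    then show ?thesis unfolding n_def by linarith
  qed
  ultimately have nn: "real n > (v - u) / e" by linarith
  have npos: "real n > 0" unfolding n_def by (simp add: add_pos_nonneg)
  have vu: "v - u > 0" using u v by simp
  have ne: "(v - u) / real n < e" using nn e npos by (simp add: field_simps)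
  define a where "a = nat (floor (real n * v / (v - u)))"
  have q0: "real n * v / (v - u) \<ge> 0" using npos v vu by simp
  have a1: "real a \<le> real n * v / (v - u)" unfolding a_def using q0 by linarith
  have a2: "real n * v / (v - u) < real a + 1" unfolding a_def using q0 by linarith
  have "real n * u \<le> 0" using npos u by (simp add: mult_nonneg_nonpos)
  then have "real n * v / (v - u) \<le> real n" using npos vu u v by (simp add: field_simps)
  then have an: "a \<le> n" using a1 by linarith
  define f where "f = real a * u + real (n - a) * v"
  have f_eq: "f = real n * v - real a * (v - u)" using an by (simp add: f_def of_nat_diff algebra_simps)
  have f0: "f \<ge> 0" using a1 vu by (simp add: f_eq field_simps)
  have f1: "f < v - u" using a2 vu by (simp add: f_eq field_simps)
  define \<delta> where "\<delta> = - f / real n"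
  have dl: "\<bar>\<delta>\<bar> < e"
  proof -
    have "\<bar>\<delta>\<bar> = f / real n" using f0 npos by (simp add: \<delta>_def)
    also have "\<dots> < (v - u) / real n" using f1 npos by (simp add: divide_strict_right_mono)
    finally show ?thesis using ne by simp
  qed
  have p: "u + \<delta> \<in> \<Omega>" using e dl by (auto simp: dist_real_def)
  have q: "v + \<delta> \<in> \<Omega>" using e dl by (auto simp: dist_real_def)
  have "real a * (u + \<delta>) + real (n - a) * (v + \<delta>) \<in> \<Omega>"
    apply (rule iter[where \<Omega>=\<Omega> and m=m and a=a and b="n - a" and j=j]) apply (fact C1) apply (fact m) apply (fact p) apply (fact q) using an by (simp add: n_def)
  moreover have "real a * (u + \<delta>) + real (n - a) * (v + \<delta>) = f + real n * \<delta>"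
    using an by (simp add: f_def of_nat_diff algebra_simps)
  moreover have "f + real n * \<delta> = 0" using npos by (simp add: \<delta>_def)
  ultimately show ?thesis by simp
qed

lemma neg_case:
  fixes \<Omega> :: "real set"
  assumes C1: "\<And>p q r c d. p\<in>\<Omega> \<Longrightarrow> q\<in>\<Omega> \<Longrightarrow> r\<in>\<Omega> \<Longrightarrow> c + d + 1 = m \<Longrightarrow> real c * p + real d * q + r \<in> \<Omega>"
    and C2: "\<And>x. x \<in> \<Omega> \<Longrightarrow> \<exists>y. (\<forall>k\<in>{1..m}. y k \<in> \<Omega>) \<and> x = (\<Sum>k\<in>{1..m}. y k)"
    and m: "m \<ge> 2" and op: "open \<Omega>" and ne: "\<Omega> \<noteq> {}" and neg: "\<Omega> \<subseteq> {..<0}"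
  shows "\<Omega> = {..<0}"
proof -
  have bdd: "bdd_above \<Omega>" using neg by (intro bdd_aboveI[of _ 0]) auto
  have near: "\<exists>x\<in>\<Omega>. y < x" if "y < 0" for y
  proof (rule ccontr)
    assume "\<not> ?thesis"
    then have le: "\<forall>x\<in>\<Omega>. x \<le> y" by auto
    define s where "s = Sup \<Omega>"
    have sy: "s \<le> y" unfolding s_def using ne le by (simp add: cSup_least)
    have m2: "real m \<ge> 2" using m by simp
    have "real m * s \<le> 2 * s" by (rule mult_right_mono_neg) (use m2 sy that in auto)
    then have "real m * s < Sup \<Omega>" using sy that unfolding s_def by linarith
    then have "\<exists>u\<in>\<Omega>. real m * s < u" using less_cSup_iff[OF ne bdd] by blast
    then obtain u where u: "u \<in> \<Omega>" "real m * s < u" by blast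
    obtain yy where yy: "\<forall>k\<in>{1..m}. yy k \<in> \<Omega>" "u = (\<Sum>k\<in>{1..m}. yy k)" using C2[OF u(1)] by blast
    have "(\<Sum>k\<in>{1..m}. yy k) \<le> (\<Sum>k\<in>{1..m}. s)"
      by (rule sum_mono) (use yy bdd in \<open>auto simp: s_def intro: cSup_upper\<close>)
    then have "u \<le> real m * s" using yy by simp
    then show False using u by simp
  qed
  have "y \<in> \<Omega>" if y: "y < 0" for y
  proof -
    obtain x where x: "x \<in> \<Omega>" "y < x" using near y by blast
    obtain e where e: "e > 0" "ball x e \<subseteq> \<Omega>" using op x open_contains_ball by blast
    have m1: "real (m - 1) \<ge> 1" using m by simp
    obtain z where z: "z \<in> \<Omega>" "- e / real (m-1) < z" using near[of "- e / real (m-1)"] e m1 by auto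
    have zneg: "z < 0" using z neg by auto
    define st where "st = real (m-1) * (-z)"
    have stpos: "st > 0" unfolding st_def using zneg m1 by (intro mult_pos_pos) auto
    have stl: "st < e" using z m1 by (simp add: st_def field_simps)
    define j where "j = nat (floor ((x - y) / st))"
    have q0: "(x - y) / st \<ge> 0" using x stpos by simp
    have j1: "real j \<le> (x - y) / st" unfolding j_def using q0 by linarith
    have j2: "(x - y) / st < real j + 1" unfolding j_def using q0 by linarith
    define x' where "x' = y + real j * st"
    have "x' \<le> x" using j1 stpos by (simp add: x'_def field_simps)
    moreover have "x - x' < st" using j2 stpos by (simp add: x'_def field_simps)
    ultimately have "dist x x' < e" using stl by (simp add: dist_real_def)
    then have x'in: "x' \<in> \<Omega>" using e by auto
    have "real 1 * x' + real (j*(m-1)) * z \<in> \<Omega>"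
      apply (rule iter[where \<Omega>=\<Omega> and m=m and a=1 and b="j*(m-1)" and j=j]) apply (fact C1) apply (fact m) apply (fact x'in) apply (fact z(1)) by simp
    moreover have "real 1 * x' + real (j*(m-1)) * z = y"
      by (simp only: of_nat_mult x'_def st_def) (simp add: algebra_simps)
    ultimately show ?thesis by simp
  qed
  then show ?thesis using neg by auto
qed

theorem lemma5p1:
  fixes \<Omega> :: "real set" and m :: nat
  assumes "open \<Omega>" and "\<Omega> \<noteq> {}" and "m \<ge> 2"
    and "\<Omega> = msum m \<Omega>"
  shows "\<Omega> = {0<..} \<or> \<Omega> = {..<0} \<or> \<Omega> = UNIV"
proof -
  note op = assms(1) and ne = assms(2) and m = assms(3) and eq = assms(4)
  have C1: "\<And>p q r c d. p\<in>\<Omega> \<Longrightarrow> q\<in>\<Omega> \<Longrightarrow> r\<in>\<Omega> \<Longrightarrow> c + d + 1 = m \<Longrightarrow> real c * p + real d * q + r \<in> \<Omega>"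
    by (rule C1_of_msum[OF eq])
  have C2: "\<And>x. x \<in> \<Omega> \<Longrightarrow> \<exists>y. (\<forall>k\<in>{1..m}. y k \<in> \<Omega>) \<and> x = (\<Sum>k\<in>{1..m}. y k)"
  proof -
    fix x assume x: "x \<in> \<Omega>"
    have "x \<in> \<Omega> \<longleftrightarrow> x \<in> msum m \<Omega>" using eq by (rule arg_cong)
    then have "x \<in> msum m \<Omega>" using x by blast
    then show "\<exists>y. (\<forall>k\<in>{1..m}. y k \<in> \<Omega>) \<and> x = (\<Sum>k\<in>{1..m}. y k)"
      unfolding msum_def mem_Collect_eq by blast
  qed
  show ?thesis
  proof (cases "0 \<in> \<Omega>")
    case True
    then show ?thesis using zero_case[where \<Omega>=\<Omega> and m=m, OF C1 m op] by blast
  next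
    case False
    show ?thesis
    proof (cases "\<exists>u\<in>\<Omega>. u < 0")
      case True
      then obtain u where u: "u \<in> \<Omega>" "u < 0" by blast
      show ?thesis
      proof (cases "\<exists>v\<in>\<Omega>. v > 0")
        case True
        then obtain v where "v \<in> \<Omega>" "v > 0" by blast
        then have "0 \<in> \<Omega>" using mixed_case[where \<Omega>=\<Omega> and m=m, OF C1 m op u] by blast
        then show ?thesis using False by blast
      next
        case F2: False
        have "\<Omega> \<subseteq> {..<0}"
        proof
          fix x assume x: "x \<in> \<Omega>"
          then have "x \<noteq> 0" using False by auto
          moreover have "\<not> x > 0" using F2 x by auto
          ultimately show "x \<in> {..<0}" by auto
        qed
        then show ?thesis using neg_case[where \<Omega>=\<Omega> and m=m, OF C1 C2 m op ne] by blast
      qed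
    next
      case True2: False
      have pos: "\<Omega> \<subseteq> {0<..}"
      proof
        fix x assume x: "x \<in> \<Omega>"
        then have "x \<noteq> 0" using False by auto
        moreover have "\<not> x < 0" using True2 x by auto
        ultimately show "x \<in> {0<..}" by auto
      qed
      define \<Omega>' where "\<Omega>' = uminus ` \<Omega>"
      have memi: "x \<in> \<Omega>' \<longleftrightarrow> - x \<in> \<Omega>" for x
        unfolding \<Omega>'_def
      proof
        assume "x \<in> uminus ` \<Omega>"
        then obtain w where "w \<in> \<Omega>" "x = - w" by auto
        then show "- x \<in> \<Omega>" by simp
      next
        assume "- x \<in> \<Omega>"
        then show "x \<in> uminus ` \<Omega>" by (rule rev_image_eqI) simp
      qed
      have C1': "real c * p + real d * q + r \<in> \<Omega>'"
        if "p\<in>\<Omega>'" "q\<in>\<Omega>'" "r\<in>\<Omega>'" "c + d + 1 = m" for p q r c d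
      proof -
        have a1: "-p \<in> \<Omega>" using that(1) memi[of p] by blast
        have a2: "-q \<in> \<Omega>" using that(2) memi[of q] by blast
        have a3: "-r \<in> \<Omega>" using that(3) memi[of r] by blast
        have h: "real c * (-p) + real d * (-q) + (-r) \<in> \<Omega>"
          by (rule C1[OF a1 a2 a3 that(4)])
        have "- (real c * p + real d * q + r) = real c * (-p) + real d * (-q) + (-r)"
          by (simp add: algebra_simps)
        then have "- (real c * p + real d * q + r) \<in> \<Omega>" using h by simp
        then show ?thesis using memi[of "real c * p + real d * q + r"] by blast
      qed
      have C2': "\<exists>y. (\<forall>k\<in>{1..m}. y k \<in> \<Omega>') \<and> x = (\<Sum>k\<in>{1..m}. y k)"
        if xin: "x \<in> \<Omega>'" for x
      proof -
        obtain y where y: "\<forall>k\<in>{1..m}. y k \<in> \<Omega>" "- x = (\<Sum>k\<in>{1..m}. y k)"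
          using C2[of "-x"] xin memi[of x] by blast
        have "\<forall>k\<in>{1..m}. - y k \<in> \<Omega>'" using y memi by simp
        moreover have "x = (\<Sum>k\<in>{1..m}. - y k)" using y(2) by (simp add: sum_negf)
        ultimately show ?thesis by (intro exI[of _ "\<lambda>k. - y k"]) simp
      qed
      have op': "open \<Omega>'" unfolding \<Omega>'_def using op by (simp add: open_negations)
      have ne': "\<Omega>' \<noteq> {}" using ne by (simp add: \<Omega>'_def)
      have neg': "\<Omega>' \<subseteq> {..<0}" using pos memi by auto
      have "\<Omega>' = {..<0}" using neg_case[where \<Omega>=\<Omega>' and m=m, OF C1' C2' m op' ne' neg'] by blast
      have "x \<in> \<Omega> \<longleftrightarrow> x > 0" for x
      proof -
        have "x \<in> \<Omega> \<longleftrightarrow> -x \<in> \<Omega>'" using memi[of "-x"] by simp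
        also have "\<dots> \<longleftrightarrow> x > 0" using \<open>\<Omega>' = {..<0}\<close> by simp
        finally show ?thesis .
      qed
      then have "\<Omega> = {0<..}" by auto
      then show ?thesis by blast
    qed
  qed
qed

end
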